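(* Let $(\varrho_\varepsilon)_{\varepsilon\in(0,\bar\varepsilon)}$ be a family of normal states on $\mathcal{H}$ and $\mathfrak{C}>0$. Then $\mathrm{Tr}[\varrho_\varepsilon N_1^k]\le\mathfrak{C}^k$ for all $\varepsilon\in(0,\bar\varepsilon)$ and all $k\in\mathbb{N}$ if and only if for every $\varepsilon\in(0,\bar\varepsilon)$ there exist an orthonormal sequence $(\Psi_i(\varepsilon))_{i\in\mathbb{N}}$ in $\mathcal{H}$, each with non-zero components only in $\bigoplus_{n=0}^{[\mathfrak{C}/\varepsilon]}\mathcal{H}_n$, and a sequence $(\lambda_i(\varepsilon))_{i}\in\ell^1$ with each $\lambda_i(\varepsilon)>0$, such that $\varrho_\varepsilon=\sum_i\lambda_i(\varepsilon)|\Psi_i(\varepsilon)\rangle\langle\Psi_i(\varepsilon)|$.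
   Context: $\mathcal{H}=\Gamma_s(L^2(\mathbb{R}^3))\otimes\Gamma_s(L^2(\mathbb{R}^3))=\bigoplus_n\mathcal{H}_n$ with $\mathcal{H}_n=L^2(\mathbb{R}^3)^{\otimes_sn}\otimes\Gamma_s(L^2(\mathbb{R}^3))$; $N_1$ is the ($\varepsilon$-dependent) nucleon number operator, equal to $\varepsilon n$ on $\mathcal{H}_n$. $[\cdot]$ denotes integer part. *)

theory Defs
  imports "HOL-Analysis.Analysis"
begin

text \<open>Each H_n is an infinite-dimensional separable complex Hilbert space, so up to a
  grading-preserving unitary H is l2(nat x nat), where the basis vector e (n,m) is the
  m-th basis vector of the sector H_n.\<close>

type_synonym vec = "nat \<times> nat \<Rightarrow> complex"

definition l2 :: "vec set" where
  "l2 = {f. (\<lambda>a. (cmod (f a))^2) summable_on UNIV}"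

definition cinner :: "vec \<Rightarrow> vec \<Rightarrow> complex" where
  "cinner f g = (\<Sum>\<^sub>\<infinity>a. cnj (f a) * g a)"

definition l2norm :: "vec \<Rightarrow> real" where
  "l2norm f = sqrt (\<Sum>\<^sub>\<infinity>a. (cmod (f a))^2)"

definition basis :: "nat \<times> nat \<Rightarrow> vec" where
  "basis a = (\<lambda>b. if b = a then 1 else 0)"

text \<open>Bounded complex-linear operator on l2 (only its values on l2 matter).\<close>
definition bounded_op :: "(vec \<Rightarrow> vec) \<Rightarrow> bool" where
  "bounded_op T \<longleftrightarrow>
     (\<forall>x\<in>l2. T x \<in> l2) \<and>
     (\<forall>x\<in>l2. \<forall>y\<in>l2. \<forall>c::complex. T (\<lambda>a. x a + c * y a) = (\<lambda>a. T x a + c * T y a)) \<and>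
     (\<exists>K. \<forall>x\<in>l2. l2norm (T x) \<le> K * l2norm x)"

definition positive_op :: "(vec \<Rightarrow> vec) \<Rightarrow> bool" where
  "positive_op T \<longleftrightarrow> (\<forall>x\<in>l2. cinner x (T x) \<in> \<real> \<and> Re (cinner x (T x)) \<ge> 0)"

text \<open>Normal state: positive bounded operator of trace one (a positive operator with
  finite trace is trace class; its trace is the basis sum of diagonal entries).\<close>
definition normal_state :: "(vec \<Rightarrow> vec) \<Rightarrow> bool" where
  "normal_state \<rho> \<longleftrightarrow> bounded_op \<rho> \<and> positive_op \<rho> \<and>
     ((\<lambda>a. Re (cinner (basis a) (\<rho> (basis a)))) has_sum 1) UNIV"

text \<open>N_1 acts as eps * n on H_n, i.e. N_1 (basis (n,m)) = eps*n * basis (n,m).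
  Tr[rho N_1^k] (possibly infinite), computed in the eigenbasis of N_1.\<close>
definition moment :: "real \<Rightarrow> (vec \<Rightarrow> vec) \<Rightarrow> nat \<Rightarrow> ennreal" where
  "moment \<epsilon> \<rho> k = (\<Sum>\<^sub>\<infinity>a. ennreal ((\<epsilon> * real (fst a))^k * Re (cinner (basis a) (\<rho> (basis a)))))"

definition orthonormal_on :: "nat set \<Rightarrow> (nat \<Rightarrow> vec) \<Rightarrow> bool" where
  "orthonormal_on I \<Psi> \<longleftrightarrow> (\<forall>i\<in>I. \<Psi> i \<in> l2) \<and>
     (\<forall>i\<in>I. \<forall>j\<in>I. cinner (\<Psi> i) (\<Psi> j) = (if i = j then 1 else 0))"

end

theory Submission
  imports Defs
begin


lemma l2_iff: "f \<in> l2 \<longleftrightarrow> (\<lambda>a. (cmod (f a))^2) summable_on UNIV"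
  by (simp add: l2_def)

lemma sq_ineq: "(p + q)^2 \<le> 2 * p^2 + 2 * (q::real)^2"
proof -
  have "2 * p^2 + 2 * q^2 - (p + q)^2 = (p - q)^2" by (simp add: power2_eq_square algebra_simps)
  thus ?thesis using zero_le_power2[of "p - q"] by linarith
qed

lemma prod_ineq: "p * q \<le> p^2 + (q::real)^2"
proof -
  have "p^2 + q^2 - 2 * (p * q) = (p - q)^2" by (simp add: power2_eq_square algebra_simps)
  thus ?thesis using zero_le_power2[of "p - q"] zero_le_power2[of p] zero_le_power2[of q] by linarith
qed

lemma sq_add_le: "(cmod (u + v))^2 \<le> 2 * (cmod u)^2 + 2 * (cmod v)^2"
proof -
  have "cmod (u+v) \<le> cmod u + cmod v" by (rule norm_triangle_ineq)
  hence "(cmod (u+v))^2 \<le> (cmod u + cmod v)^2" by (simp add: power_mono)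
  also have "\<dots> \<le> 2 * (cmod u)^2 + 2 * (cmod v)^2"
    using sq_ineq[of "cmod u" "cmod v"] by simp
  finally show ?thesis .
qed

lemma l2_lin: assumes "x \<in> l2" "y \<in> l2" shows "(\<lambda>a. x a + c * y a) \<in> l2"
proof -
  have s: "(\<lambda>a. 2 * (cmod (x a))^2 + 2 * (cmod c)^2 * (cmod (y a))^2) summable_on UNIV"
    using assms by (intro summable_on_add summable_on_cmult_right) (auto simp: l2_def)
  show ?thesis unfolding l2_def mem_Collect_eq
    apply (rule summable_on_comparison_test[OF s])
    subgoal for a using sq_add_le[of "x a" "c * y a"] by (auto simp: norm_mult power_mult_distrib)
    by simp
qed

lemma l2_zero[simp]: "(\<lambda>_. 0) \<in> l2" by (simp add: l2_def)

lemma l2_scale: "x \<in> l2 \<Longrightarrow> (\<lambda>a. c * x a) \<in> l2"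
  using l2_lin[of "\<lambda>_. 0" x c] by simp

lemma l2_add: "x \<in> l2 \<Longrightarrow> y \<in> l2 \<Longrightarrow> (\<lambda>a. x a + y a) \<in> l2"
  using l2_lin[of x y 1] by simp

lemma l2_diff: "x \<in> l2 \<Longrightarrow> y \<in> l2 \<Longrightarrow> (\<lambda>a. x a - y a) \<in> l2"
  using l2_lin[of x y "-1"] by simp

lemma l2_finite_supp: assumes "finite {a. f a \<noteq> 0}" shows "f \<in> l2"
  unfolding l2_def mem_Collect_eq
  by (rule finite_nonzero_values_imp_summable_on) (use assms in auto)

lemma l2_basis[simp]: "basis a \<in> l2"
  by (rule l2_finite_supp) (simp add: basis_def)

lemma inner_abs_summable: assumes "x \<in> l2" "y \<in> l2"
  shows "(\<lambda>a. norm (cnj (x a) * y a)) summable_on UNIV"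
proof -
  have s: "(\<lambda>a. (cmod (x a))^2 + (cmod (y a))^2) summable_on UNIV"
    using assms by (intro summable_on_add) (auto simp: l2_def)
  show ?thesis
    apply (rule summable_on_comparison_test[OF s])
    by (auto simp: norm_mult prod_ineq)
qed

lemma inner_summable: "x \<in> l2 \<Longrightarrow> y \<in> l2 \<Longrightarrow> (\<lambda>a. cnj (x a) * y a) summable_on UNIV"
  by (rule abs_summable_summable) (rule inner_abs_summable)

lemma cinner_lin2: assumes "x \<in> l2" "y \<in> l2" "z \<in> l2"
  shows "cinner z (\<lambda>a. x a + c * y a) = cinner z x + c * cinner z y"
proof -
  have "cinner z (\<lambda>a. x a + c * y a) = (\<Sum>\<^sub>\<infinity>a. cnj (z a) * x a + c * (cnj (z a) * y a))"
    unfolding cinner_def by (simp add: algebra_simps)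
  also have "\<dots> = cinner z x + c * cinner z y" unfolding cinner_def
    using assms by (subst infsum_add) (auto intro!: inner_summable summable_on_cmult_right simp: infsum_cmult_right')
  finally show ?thesis .
qed

lemma cinner_cnj: "cinner y x = cnj (cinner x y)"
  unfolding cinner_def infsum_cnj[symmetric] by (simp add: mult.commute)

lemma cinner_lin1: assumes "x \<in> l2" "y \<in> l2" "z \<in> l2"
  shows "cinner (\<lambda>a. x a + c * y a) z = cinner x z + cnj c * cinner y z"
  using cinner_lin2[OF assms, of c] by (subst (1 2 3) cinner_cnj) simp

lemma cinner_self: assumes "x \<in> l2" shows "cinner x x = complex_of_real (\<Sum>\<^sub>\<infinity>a. (cmod (x a))^2)"
proof -
  have "cinner x x = (\<Sum>\<^sub>\<infinity>a. complex_of_real ((cmod (x a))^2))"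
    unfolding cinner_def by (intro infsum_cong) (metis complex_norm_square of_real_power mult.commute)
  also have "\<dots> = complex_of_real (\<Sum>\<^sub>\<infinity>a. (cmod (x a))^2)"
    by (rule infsumI, rule has_sum_of_real, rule has_sum_infsum) (use assms in \<open>simp add: l2_def\<close>)
  finally show ?thesis .
qed

definition nsq :: "vec \<Rightarrow> real" where "nsq x = (\<Sum>\<^sub>\<infinity>a. (cmod (x a))^2)"

lemma nsq_nonneg: "0 \<le> nsq x" unfolding nsq_def by (rule infsum_nonneg) simp

lemma l2norm_nsq: "l2norm x = sqrt (nsq x)" by (simp add: l2norm_def nsq_def)

lemma cinner_self_nsq: "x \<in> l2 \<Longrightarrow> cinner x x = complex_of_real (nsq x)"
  by (simp add: cinner_self nsq_def)

definition sesq :: "(vec \<Rightarrow> vec \<Rightarrow> complex) \<Rightarrow> bool" where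
  "sesq F \<longleftrightarrow> (\<forall>x\<in>l2. \<forall>y\<in>l2. \<forall>z\<in>l2. \<forall>c. F z (\<lambda>a. x a + c * y a) = F z x + c * F z y) \<and>
     (\<forall>x\<in>l2. \<forall>y\<in>l2. F x y = cnj (F y x)) \<and> (\<forall>x\<in>l2. 0 \<le> Re (F x x))"

lemma sesq_lin2: "sesq F \<Longrightarrow> x \<in> l2 \<Longrightarrow> y \<in> l2 \<Longrightarrow> z \<in> l2 \<Longrightarrow>
   F z (\<lambda>a. x a + c * y a) = F z x + c * F z y"
  unfolding sesq_def by blast

lemma sesq_herm: "sesq F \<Longrightarrow> x \<in> l2 \<Longrightarrow> y \<in> l2 \<Longrightarrow> F x y = cnj (F y x)"
  unfolding sesq_def by blast

lemma sesq_pos: "sesq F \<Longrightarrow> x \<in> l2 \<Longrightarrow> 0 \<le> Re (F x x)"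
  unfolding sesq_def by blast

lemma sesq_lin1: assumes "sesq F" "x \<in> l2" "y \<in> l2" "z \<in> l2"
  shows "F (\<lambda>a. x a + c * y a) z = F x z + cnj c * F y z"
proof -
  have w: "(\<lambda>a. x a + c * y a) \<in> l2" using assms by (simp add: l2_lin)
  have "F (\<lambda>a. x a + c * y a) z = cnj (F z (\<lambda>a. x a + c * y a))"
    using sesq_herm[OF assms(1) w assms(4)] .
  also have "\<dots> = cnj (F z x + c * F z y)" using sesq_lin2[OF assms(1) assms(2-4)] by simp
  also have "\<dots> = F x z + cnj c * F y z"
    using sesq_herm[OF assms(1) assms(2,4)] sesq_herm[OF assms(1) assms(3,4)] by simp
  finally show ?thesis .
qed

lemma sesq_real: assumes "sesq F" "x \<in> l2" shows "F x x = complex_of_real (Re (F x x))"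
proof -
  have "F x x = cnj (F x x)" using sesq_herm[OF assms assms(2)] .
  hence "Im (F x x) = 0" by (metis cnj.simps(2) neg_equal_zero)
  thus ?thesis by (simp add: complex_eq_iff)
qed

lemma sesq_zero2: assumes "sesq F" "z \<in> l2" shows "F z (\<lambda>_. 0) = 0"
  using sesq_lin2[OF assms(1) l2_zero l2_zero assms(2), of 1] by simp

lemma sesq_scale2: assumes "sesq F" "x \<in> l2" "z \<in> l2" shows "F z (\<lambda>a. c * x a) = c * F z x"
  using sesq_lin2[OF assms(1) l2_zero assms(2,3), of c] sesq_zero2[OF assms(1,3)] by simp

lemma sesq_scale1: assumes "sesq F" "x \<in> l2" "z \<in> l2" shows "F (\<lambda>a. c * x a) z = cnj c * F x z"
  using sesq_lin1[OF assms(1) l2_zero assms(2,3), of c] sesq_zero2[OF assms(1,3)]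
    sesq_herm[OF assms(1) l2_zero assms(3)] by simp

lemma sesq_expand: assumes "sesq F" "x \<in> l2" "y \<in> l2"
  shows "F (\<lambda>a. x a + s * y a) (\<lambda>a. x a + s * y a) =
     F x x + s * F x y + cnj s * F y x + cnj s * s * F y y"
proof -
  have w: "(\<lambda>a. x a + s * y a) \<in> l2" using assms by (simp add: l2_lin)
  show ?thesis
    using sesq_lin1[OF assms(1) assms(2,3) w, of s] sesq_lin2[OF assms(1) assms(2,3) assms(2), of s]
      sesq_lin2[OF assms(1) assms(2,3) assms(3), of s]
    by (simp add: algebra_simps)
qed

lemma quad_ineq:
  fixes A B k :: real
  assumes "0 \<le> A" "0 \<le> B" "0 \<le> k" "\<And>t. 0 \<le> A - 2 * t * k + t^2 * k * B"
  shows "k \<le> B * A"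
proof (cases "B = 0")
  case True
  show ?thesis
  proof (rule ccontr)
    assume "\<not> k \<le> B * A"
    hence "k > 0" using True by simp
    have "0 \<le> A - 2 * ((A + 1) / (2 * k)) * k" using assms(4)[of "(A+1)/(2*k)"] True by simp
    also have "\<dots> = -1" using \<open>k > 0\<close> by (simp add: field_simps)
    finally show False by simp
  qed
next
  case False
  hence "B > 0" using assms by simp
  have "0 \<le> A - 2 * (1/B) * k + (1/B)^2 * k * B" by (rule assms(4))
  also have "\<dots> = A - k / B" using \<open>B > 0\<close> by (simp add: field_simps power2_eq_square)
  finally have "k / B \<le> A" by simp
  thus ?thesis using \<open>B > 0\<close> by (simp add: field_simps mult.commute)
qed

lemma sesq_cs: assumes "sesq F" "x \<in> l2" "y \<in> l2"
  shows "(cmod (F y x))^2 \<le> Re (F y y) * Re (F x x)"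
proof -
  define c where "c = F y x"
  have cc: "F x y = cnj c" unfolding c_def using sesq_herm[OF assms] .
  have ccn: "c * cnj c = complex_of_real ((cmod c)^2)" by (metis complex_norm_square)
  have key: "0 \<le> Re (F x x) - 2 * t * (cmod c)^2 + t^2 * (cmod c)^2 * Re (F y y)" for t :: real
  proof -
    define s where "s = - (complex_of_real t * c)"
    have w: "(\<lambda>a. x a + s * y a) \<in> l2" using assms by (simp add: l2_lin)
    have "0 \<le> Re (F (\<lambda>a. x a + s * y a) (\<lambda>a. x a + s * y a))" by (rule sesq_pos[OF assms(1) w])
    also have "F (\<lambda>a. x a + s * y a) (\<lambda>a. x a + s * y a) =
       F x x + s * cnj c + cnj s * c + cnj s * s * F y y"
      using sesq_expand[OF assms(1,2,3), of s] cc c_def by simp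
    also have "s * cnj c = - complex_of_real (t * (cmod c)^2)"
      unfolding s_def using ccn by (simp add: algebra_simps)
    also have "cnj s * c = - complex_of_real (t * (cmod c)^2)"
      unfolding s_def using ccn by (simp add: algebra_simps)
    also have "cnj s * s = complex_of_real (t^2 * (cmod c)^2)"
      unfolding s_def using ccn by (simp add: algebra_simps power2_eq_square)
    also have "F y y = complex_of_real (Re (F y y))" using sesq_real[OF assms(1,3)] .
    finally show ?thesis by simp
  qed
  have "(cmod c)^2 \<le> Re (F y y) * Re (F x x)"
    by (rule quad_ineq) (use key sesq_pos[OF assms(1)] assms in auto)
  thus ?thesis by (simp add: c_def)
qed

lemma sesq_cinner: "sesq cinner"
  unfolding sesq_def
proof (intro conjI ballI allI)
  show "cinner z (\<lambda>a. x a + c * y a) = cinner z x + c * cinner z y" if "x \<in> l2" "y \<in> l2" "z \<in> l2" for x y z c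
    using cinner_lin2 that by blast
  show "cinner x y = cnj (cinner y x)" for x y by (rule cinner_cnj)
  show "0 \<le> Re (cinner x x)" if "x \<in> l2" for x using that by (simp add: cinner_self_nsq nsq_nonneg)
qed

lemma cinner_cs: assumes "x \<in> l2" "y \<in> l2" shows "cmod (cinner y x) \<le> l2norm y * l2norm x"
proof -
  have "(cmod (cinner y x))^2 \<le> nsq y * nsq x"
    using sesq_cs[OF sesq_cinner assms] assms by (simp add: cinner_self_nsq)
  hence "sqrt ((cmod (cinner y x))^2) \<le> sqrt (nsq y * nsq x)" by (rule real_sqrt_le_mono)
  thus ?thesis by (simp add: l2norm_nsq real_sqrt_mult)
qed



definition qf :: "(vec \<Rightarrow> vec \<Rightarrow> complex) \<Rightarrow> vec \<Rightarrow> real" where "qf F x = Re (F x x)"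
definition pf :: "(vec \<Rightarrow> vec \<Rightarrow> complex) \<Rightarrow> vec \<Rightarrow> real" where "pf F x = sqrt (qf F x)"

lemma qf_nonneg: "sesq F \<Longrightarrow> x \<in> l2 \<Longrightarrow> 0 \<le> qf F x"
  unfolding qf_def by (rule sesq_pos)

lemma pf_sq: "sesq F \<Longrightarrow> x \<in> l2 \<Longrightarrow> (pf F x)^2 = qf F x"
  unfolding pf_def by (drule (1) qf_nonneg) simp

lemma pf_nonneg: "sesq F \<Longrightarrow> x \<in> l2 \<Longrightarrow> 0 \<le> pf F x"
  unfolding pf_def by (drule (1) qf_nonneg) simp

lemma sesq_cs': assumes "sesq F" "x \<in> l2" "y \<in> l2"
  shows "cmod (F y x) \<le> pf F y * pf F x"
proof -
  have "(cmod (F y x))^2 \<le> (pf F y * pf F x)^2"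
    using sesq_cs[OF assms] by (simp add: power_mult_distrib pf_sq[OF assms(1)] assms qf_def)
  thus ?thesis using pf_nonneg[OF assms(1)] assms by (meson mult_nonneg_nonneg power2_le_imp_le)
qed

lemma qf_expand: assumes "sesq F" "x \<in> l2" "y \<in> l2"
  shows "qf F (\<lambda>a. x a + s * y a) = qf F x + 2 * Re (s * F x y) + (cmod s)^2 * qf F y"
proof -
  have h: "F y x = cnj (F x y)" using sesq_herm[OF assms(1,3,2)] .
  have r: "F y y = complex_of_real (qf F y)" using sesq_real[OF assms(1,3)] by (simp add: qf_def)
  have "cnj s * s = complex_of_real ((cmod s)^2)" by (metis complex_norm_square mult.commute)
  then show ?thesis using sesq_expand[OF assms, of s] h r unfolding qf_def
    by (simp add: algebra_simps)
qed

lemma pf_triangle: assumes "sesq F" "x \<in> l2" "y \<in> l2"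
  shows "pf F (\<lambda>a. x a + y a) \<le> pf F x + pf F y"
proof -
  have "qf F (\<lambda>a. x a + y a) = qf F x + 2 * Re (F x y) + qf F y"
    using qf_expand[OF assms, of 1] by simp
  also have "Re (F x y) \<le> pf F x * pf F y" using sesq_cs'[OF assms(1,3,2)] complex_Re_le_cmod
    by (meson order_trans)
  hence "qf F x + 2 * Re (F x y) + qf F y \<le> (pf F x + pf F y)^2"
    using pf_sq[OF assms(1,2)] pf_sq[OF assms(1,3)] by (simp add: power2_sum)
  finally have "(pf F (\<lambda>a. x a + y a))^2 \<le> (pf F x + pf F y)^2"
    using pf_sq[OF assms(1) l2_add[OF assms(2,3)]] by simp
  thus ?thesis using pf_nonneg[OF assms(1)] assms by (meson add_nonneg_nonneg power2_le_imp_le)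
qed

lemma qf_scale: assumes "sesq F" "x \<in> l2" shows "qf F (\<lambda>a. c * x a) = (cmod c)^2 * qf F x"
  using qf_expand[OF assms(1) l2_zero assms(2), of c] sesq_zero2[OF assms(1) l2_zero]
    sesq_zero2[OF assms(1) assms(2)] sesq_herm[OF assms(1) l2_zero assms(2)]
  by (simp add: qf_def)

lemma pf_scale: assumes "sesq F" "x \<in> l2" shows "pf F (\<lambda>a. c * x a) = cmod c * pf F x"
  using qf_scale[OF assms, of c] by (simp add: pf_def real_sqrt_mult)

definition diag :: "(vec \<Rightarrow> vec \<Rightarrow> complex) \<Rightarrow> nat \<times> nat \<Rightarrow> real" where
  "diag F a = Re (F (basis a) (basis a))"

lemma pf_basis: assumes "sesq F" shows "pf F (\<lambda>b. c * basis a b) = cmod c * sqrt (diag F a)"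
  using pf_scale[OF assms l2_basis] by (simp add: pf_def qf_def diag_def)

definition trunc :: "(nat \<times> nat) set \<Rightarrow> vec \<Rightarrow> vec" where
  "trunc G w = (\<lambda>a. if a \<in> G then w a else 0)"

lemma trunc_l2: "finite G \<Longrightarrow> trunc G w \<in> l2"
  by (rule l2_finite_supp) (auto simp: trunc_def elim: finite_subset[rotated])

lemma pf_trunc_le: assumes "sesq F" "finite G"
  shows "pf F (trunc G w) \<le> (\<Sum>a\<in>G. cmod (w a) * sqrt (diag F a))"
  using assms(2)
proof (induction G rule: finite_induct)
  case empty
  have "trunc {} w = (\<lambda>_. 0)" by (simp add: trunc_def)
  then show ?case using sesq_zero2[OF assms(1) l2_zero] by (simp add: pf_def qf_def)
next
  case (insert b G)
  have eq: "trunc (insert b G) w = (\<lambda>a. trunc G w a + (\<lambda>a. w b * basis b a) a)"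
    using insert(2) by (auto simp: trunc_def basis_def)
  have "pf F (trunc (insert b G) w) \<le> pf F (trunc G w) + pf F (\<lambda>a. w b * basis b a)"
    unfolding eq by (rule pf_triangle[OF assms(1) trunc_l2[OF insert(1)] l2_scale[OF l2_basis]])
  also have "\<dots> \<le> (\<Sum>a\<in>G. cmod (w a) * sqrt (diag F a)) + cmod (w b) * sqrt (diag F b)"
    using insert(3) pf_basis[OF assms(1)] by simp
  finally show ?case using insert(1,2) by (simp add: add.commute)
qed


lemma diag_nonneg: "sesq F \<Longrightarrow> 0 \<le> diag F a"
  unfolding diag_def by (erule sesq_pos) simp

definition good :: "(vec \<Rightarrow> vec \<Rightarrow> complex) \<Rightarrow> real \<Rightarrow> real \<Rightarrow> bool" where
  "good F K t \<longleftrightarrow> sesq F \<and> (\<forall>x\<in>l2. qf F x \<le> K * nsq x) \<and> (diag F has_sum t) UNIV"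

lemma infsum_compl_finite:
  fixes f :: "'a \<Rightarrow> real"
  assumes "f summable_on UNIV" "finite G"
  shows "infsum f (- G) = infsum f UNIV - sum f G" "f summable_on (- G)"
proof -
  show s: "f summable_on (- G)" using summable_on_subset_banach[OF assms(1)] by blast
  have "infsum f (G \<union> - G) = infsum f G + infsum f (- G)"
    by (rule infsum_Un_disjoint) (use assms s in auto)
  thus "infsum f (- G) = infsum f UNIV - sum f G" using assms(2) by simp
qed

lemma nsq_summable: "x \<in> l2 \<Longrightarrow> (\<lambda>a. (cmod (x a))^2) summable_on UNIV" by (simp add: l2_def)

lemma nsq_trunc_rest: assumes "w \<in> l2" "finite G"
  shows "nsq (\<lambda>a. w a - trunc G w a) = nsq w - (\<Sum>a\<in>G. (cmod (w a))^2)"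
proof -
  have "nsq (\<lambda>a. w a - trunc G w a) = infsum (\<lambda>a. (cmod (w a))^2) (- G)"
    unfolding nsq_def by (rule infsum_cong_neutral) (auto simp: trunc_def)
  thus ?thesis using infsum_compl_finite[OF nsq_summable[OF assms(1)] assms(2)] by (simp add: nsq_def)
qed

lemma nsq_approx: assumes "w \<in> l2" "e > 0"
  shows "\<exists>G. finite G \<and> nsq (\<lambda>a. w a - trunc G w a) \<le> e"
proof -
  obtain G where G: "finite G" "dist (sum (\<lambda>a. (cmod (w a))^2) G) (nsq w) \<le> e"
    using infsum_finite_approximation[OF nsq_summable[OF assms(1)] assms(2)] unfolding nsq_def by auto
  thus ?thesis using nsq_trunc_rest[OF assms(1) G(1)] by (auto simp: dist_real_def)
qed

lemma S_summable: assumes "sesq F" "diag F summable_on UNIV" "w \<in> l2"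
  shows "(\<lambda>a. cmod (w a) * sqrt (diag F a)) summable_on UNIV"
proof -
  have s: "(\<lambda>a. (cmod (w a))^2 + diag F a) summable_on UNIV"
    using assms by (intro summable_on_add) (auto simp: l2_def)
  show ?thesis
    apply (rule summable_on_comparison_test[OF s])
    using prod_ineq[of "cmod (w _)" "sqrt (diag F _)"] diag_nonneg[OF assms(1)] by auto
qed

definition Sf :: "(vec \<Rightarrow> vec \<Rightarrow> complex) \<Rightarrow> vec \<Rightarrow> real" where
  "Sf F w = (\<Sum>\<^sub>\<infinity>a. cmod (w a) * sqrt (diag F a))"

lemma pf_le_S: assumes "good F K t" "w \<in> l2" shows "pf F w \<le> Sf F w"
proof (rule field_le_epsilon)
  fix e :: real assume e: "e > 0"
  have F: "sesq F" and bd: "\<forall>x\<in>l2. qf F x \<le> K * nsq x" and tr: "diag F summable_on UNIV"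
    using assms(1) by (auto simp: good_def has_sum_imp_summable)
  define \<epsilon> where "\<epsilon> = e^2 / (\<bar>K\<bar> + 1)"
  have "\<epsilon> > 0" using e by (simp add: \<epsilon>_def)
  then obtain G where G: "finite G" "nsq (\<lambda>a. w a - trunc G w a) \<le> \<epsilon>"
    using nsq_approx[OF assms(2)] by blast
  define r where "r = (\<lambda>a. w a - trunc G w a)"
  have rl2: "r \<in> l2" unfolding r_def by (rule l2_diff[OF assms(2) trunc_l2[OF G(1)]])
  have weq: "w = (\<lambda>a. trunc G w a + r a)" by (simp add: r_def)
  have "pf F w \<le> pf F (trunc G w) + pf F r"
    by (subst weq, rule pf_triangle[OF F trunc_l2[OF G(1)] rl2])
  also have "pf F (trunc G w) \<le> Sf F w"
  proof -
    have "pf F (trunc G w) \<le> (\<Sum>a\<in>G. cmod (w a) * sqrt (diag F a))" by (rule pf_trunc_le[OF F G(1)])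
    also have "\<dots> \<le> Sf F w" unfolding Sf_def
      by (rule finite_sum_le_infsum[OF S_summable[OF F tr assms(2)] G(1)])
         (auto simp: diag_nonneg[OF F])
    finally show ?thesis .
  qed
  also have "pf F r \<le> e"
  proof -
    have "(pf F r)^2 = qf F r" by (rule pf_sq[OF F rl2])
    also have "\<dots> \<le> K * nsq r" using bd rl2 by blast
    also have "\<dots> \<le> \<bar>K\<bar> * \<epsilon>" using G(2) nsq_nonneg[of r] unfolding r_def
      by (smt (verit, ccfv_SIG) mult_mono abs_ge_self abs_ge_zero)
    also have "\<dots> \<le> e^2" unfolding \<epsilon>_def using e
      by (simp add: field_simps)
    finally have "(pf F r)^2 \<le> e^2" .
    thus ?thesis using e pf_nonneg[OF F rl2] by (meson less_imp_le power2_le_imp_le)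
  qed
  finally show "pf F w \<le> Sf F w + e" by simp
qed


lemma amgm: fixes x y d :: real assumes "d > 0"
  shows "x * y \<le> (d/2) * x^2 + (1/(2*d)) * y^2"
proof -
  have "(d/2) * x^2 + (1/(2*d)) * y^2 - x * y = (d * x - y)^2 / (2 * d)"
    using assms by (simp add: field_simps power2_eq_square)
  moreover have "(d * x - y)^2 / (2 * d) \<ge> 0" using assms by simp
  ultimately show ?thesis by linarith
qed

lemma S_nonneg: "sesq F \<Longrightarrow> 0 \<le> Sf F w"
  unfolding Sf_def by (rule infsum_nonneg) (simp add: diag_nonneg)

lemma S_weak: assumes "good F K t" "\<And>k. u k \<in> l2" "\<And>k. nsq (u k) \<le> B"
  "\<And>a. (\<lambda>k. u k a) \<longlonglongrightarrow> 0"
  shows "(\<lambda>k. Sf F (u k)) \<longlonglongrightarrow> 0"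
proof (rule tendstoI)
  fix e :: real assume e: "e > 0"
  have F: "sesq F" and tr: "(diag F has_sum t) UNIV"
    using assms(1) by (auto simp: good_def)
  have trs: "diag F summable_on UNIV" using tr has_sum_imp_summable by blast
  define \<delta> where "\<delta> = e / (2 * (\<bar>B\<bar> + 1))"
  have \<delta>: "\<delta> > 0" using e by (simp add: \<delta>_def)
  have \<delta>B: "\<delta> * B < e / 2"
  proof -
    have "\<delta> * B \<le> \<delta> * \<bar>B\<bar>" using \<delta> by (simp add: mult_left_mono)
    also have "\<dots> < e / 2" unfolding \<delta>_def using e by (simp add: field_simps)
    finally show ?thesis .
  qed
  obtain G where G: "finite G" "dist (sum (diag F) G) t \<le> \<delta> * e / 2"
    using has_sum_finite_approximation[OF tr, of "\<delta> * e / 2"] \<delta> e by auto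
  have tail: "infsum (diag F) (- G) \<le> \<delta> * e / 2"
    using infsum_compl_finite[OF trs G(1)] G(2) infsumI[OF tr] by (auto simp: dist_real_def abs_if split: if_splits)
  have head: "(\<lambda>k. \<Sum>a\<in>G. cmod (u k a) * sqrt (diag F a)) \<longlonglongrightarrow> 0"
    by (rule tendsto_null_sum) (auto intro!: tendsto_mult_left_zero tendsto_norm_zero assms(4))
  have "\<forall>\<^sub>F k in sequentially. dist (\<Sum>a\<in>G. cmod (u k a) * sqrt (diag F a)) 0 < e / 2"
    using tendstoD[OF head, of "e/2"] e by simp
  thus "\<forall>\<^sub>F k in sequentially. dist (Sf F (u k)) 0 < e"
  proof (rule eventually_mono)
    fix k assume hk: "dist (\<Sum>a\<in>G. cmod (u k a) * sqrt (diag F a)) 0 < e / 2"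
    define f where "f = (\<lambda>a. cmod (u k a) * sqrt (diag F a))"
    define g where "g = (\<lambda>a. (\<delta>/2) * (cmod (u k a))^2 + (1/(2*\<delta>)) * diag F a)"
    have fs: "f summable_on UNIV" unfolding f_def by (rule S_summable[OF F trs assms(2)])
    have us: "(\<lambda>a. (cmod (u k a))^2) summable_on UNIV" by (rule nsq_summable[OF assms(2)])
    have gs: "g summable_on UNIV" unfolding g_def
      using us trs by (intro summable_on_add summable_on_cmult_right)
    have "Sf F (u k) = sum f G + infsum f (- G)"
      using infsum_compl_finite[OF fs G(1)] by (simp add: Sf_def f_def)
    also have "infsum f (- G) \<le> infsum g (- G)"
      apply (rule infsum_mono)
      using infsum_compl_finite(2)[OF fs G(1)] infsum_compl_finite(2)[OF gs G(1)] apply auto[2]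
      unfolding f_def g_def using amgm[OF \<delta>, of "cmod (u k _)" "sqrt (diag F _)"] diag_nonneg[OF F]
      by simp
    also have "infsum g (- G) = (\<delta>/2) * infsum (\<lambda>a. (cmod (u k a))^2) (- G) + (1/(2*\<delta>)) * infsum (diag F) (- G)"
      unfolding g_def
      using infsum_compl_finite(2)[OF us G(1)] infsum_compl_finite(2)[OF trs G(1)]
      apply (subst infsum_add)
      by (auto intro!: summable_on_cmult_right simp only: infsum_cmult_right')
    also have "infsum (\<lambda>a. (cmod (u k a))^2) (- G) \<le> B"
    proof -
      have "infsum (\<lambda>a. (cmod (u k a))^2) (- G) = nsq (u k) - (\<Sum>a\<in>G. (cmod (u k a))^2)"
        using infsum_compl_finite[OF us G(1)] by (simp add: nsq_def)
      also have "\<dots> \<le> nsq (u k)" by (simp add: sum_nonneg)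
      finally show ?thesis using assms(3)[of k] by linarith
    qed
    hence "(\<delta>/2) * infsum (\<lambda>a. (cmod (u k a))^2) (- G) \<le> (\<delta>/2) * B" using \<delta> by simp
    moreover have "(1/(2*\<delta>)) * infsum (diag F) (- G) \<le> (1/(2*\<delta>)) * (\<delta> * e / 2)"
      using tail \<delta> by (intro mult_left_mono) auto
    moreover have "(1/(2*\<delta>)) * (\<delta> * e / 2) = e / 4" using \<delta> by (simp add: field_simps)
    moreover have "sum f G < e / 2" using hk by (simp add: f_def dist_real_def sum_nonneg)
    ultimately have "Sf F (u k) < e"
      using \<delta>B `Sf F (u k) = sum f G + infsum f (- G)` `infsum f (- G) \<le> infsum g (- G)`
        `infsum g (- G) = _` by linarith
    thus "dist (Sf F (u k)) 0 < e" using S_nonneg[OF F] by (simp add: dist_real_def)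
  qed
qed

lemma q_weak: assumes "good F K t" "\<And>k. u k \<in> l2" "\<And>k. nsq (u k) \<le> B"
  "\<And>a. (\<lambda>k. u k a) \<longlonglongrightarrow> 0"
  shows "(\<lambda>k. qf F (u k)) \<longlonglongrightarrow> 0"
proof (rule tendsto_sandwich[where f="\<lambda>_. 0" and h="\<lambda>k. (Sf F (u k))^2"])
  have F: "sesq F" using assms(1) by (simp add: good_def)
  show "\<forall>\<^sub>F k in sequentially. 0 \<le> qf F (u k)" using qf_nonneg[OF F assms(2)] by simp
  show "\<forall>\<^sub>F k in sequentially. qf F (u k) \<le> (Sf F (u k))^2"
  proof (intro always_eventually allI)
    fix k
    have "qf F (u k) = (pf F (u k))^2" using pf_sq[OF F assms(2)] by simp
    also have "\<dots> \<le> (Sf F (u k))^2"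
      using pf_le_S[OF assms(1) assms(2)] pf_nonneg[OF F assms(2)] by (simp add: power_mono)
    finally show "qf F (u k) \<le> (Sf F (u k))^2" .
  qed
  show "(\<lambda>k. (Sf F (u k))^2) \<longlonglongrightarrow> 0" using tendsto_power[OF S_weak[OF assms], of 2] by simp
qed simp




lemma subseq_pointwise:
  fixes x :: "nat \<Rightarrow> vec" assumes "\<And>k a. cmod (x k a) \<le> 1"
  shows "\<exists>r y. strict_mono r \<and> (\<forall>a. (\<lambda>k. x (r k) a) \<longlonglongrightarrow> y a)"
proof -
  define S :: "vec set" where "S = PiE UNIV (\<lambda>_. cball 0 1)"
  have "compactin (product_topology (\<lambda>_. euclidean) UNIV) S"
    unfolding S_def by (subst compactin_PiE) auto
  hence "compact S" by (simp add: euclidean_product_topology compactin_euclidean_iff)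
  hence "seq_compact S" by (rule compact_imp_seq_compact)
  moreover have "\<forall>n. x n \<in> S" using assms by (auto simp: S_def)
  ultimately obtain l r where r: "strict_mono r" "(x \<circ> r) \<longlonglongrightarrow> l"
    unfolding seq_compact_def by blast
  have "(\<lambda>k. x (r k) a) \<longlonglongrightarrow> l a" for a
  proof -
    have "isCont (\<lambda>f::vec. f a) l"
      using continuous_on_product_coordinates[of a] continuous_on_eq_continuous_at open_UNIV by blast
    from isCont_tendsto_compose[OF this r(2)] show ?thesis by (simp add: o_def)
  qed
  thus ?thesis using r by blast
qed

lemma nsq_qf: "x \<in> l2 \<Longrightarrow> nsq x = qf cinner x"
  by (simp add: qf_def cinner_self_nsq)

lemma l2norm_pf: "x \<in> l2 \<Longrightarrow> l2norm x = pf cinner x"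
  by (simp add: pf_def l2norm_nsq nsq_qf)

lemma nsq_scale: "x \<in> l2 \<Longrightarrow> nsq (\<lambda>a. c * x a) = (cmod c)^2 * nsq x"
  using qf_scale[OF sesq_cinner] l2_scale by (simp add: nsq_qf)

lemma nsq_diff_le: assumes "x \<in> l2" "y \<in> l2" "nsq x \<le> 1" "nsq y \<le> 1"
  shows "nsq (\<lambda>a. x a - y a) \<le> 4"
proof -
  have "pf cinner (\<lambda>a. x a + (-1) * y a) \<le> pf cinner x + pf cinner (\<lambda>a. (-1) * y a)"
    by (rule pf_triangle[OF sesq_cinner assms(1) l2_scale[OF assms(2)]])
  also have "pf cinner (\<lambda>a. (-1) * y a) = pf cinner y" using pf_scale[OF sesq_cinner assms(2), of "-1"] by simp
  moreover have "(\<lambda>a. x a + (-1) * y a) = (\<lambda>a. x a - y a)" by simp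
  moreover have "pf cinner x = sqrt (nsq x)" "pf cinner y = sqrt (nsq y)"
    using assms by (simp_all add: pf_def nsq_qf)
  ultimately have A: "pf cinner (\<lambda>a. x a - y a) \<le> sqrt (nsq x) + sqrt (nsq y)"
    by simp
  have "sqrt (nsq x) \<le> 1" "sqrt (nsq y) \<le> 1" using assms(3,4) by auto
  hence "pf cinner (\<lambda>a. x a - y a) \<le> 2" using A by linarith
  hence "(pf cinner (\<lambda>a. x a - y a))^2 \<le> 2^2"
    using pf_nonneg[OF sesq_cinner l2_diff[OF assms(1,2)]] by (intro power_mono) auto
  thus ?thesis using pf_sq[OF sesq_cinner l2_diff[OF assms(1,2)]] nsq_qf[OF l2_diff[OF assms(1,2)]] by simp
qed

lemma coord_le_nsq: assumes "x \<in> l2" shows "(cmod (x a))^2 \<le> nsq x"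
  unfolding nsq_def
  using finite_sum_le_infsum[OF nsq_summable[OF assms], of "{a}"] by simp


definition mu :: "(vec \<Rightarrow> vec \<Rightarrow> complex) \<Rightarrow> real" where
  "mu F = Sup {qf F x | x. x \<in> l2 \<and> nsq x \<le> 1}"

lemma mu_facts: assumes "good F K t"
  shows "bdd_above {qf F x | x. x \<in> l2 \<and> nsq x \<le> 1}" "0 \<le> mu F"
    "\<And>x. x \<in> l2 \<Longrightarrow> nsq x \<le> 1 \<Longrightarrow> qf F x \<le> mu F"
proof -
  have F: "sesq F" and bd: "\<forall>x\<in>l2. qf F x \<le> K * nsq x" using assms by (auto simp: good_def)
  show b: "bdd_above {qf F x | x. x \<in> l2 \<and> nsq x \<le> 1}"
  proof (rule bdd_aboveI)
    fix z assume "z \<in> {qf F x | x. x \<in> l2 \<and> nsq x \<le> 1}"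
    then obtain x where "z = qf F x" "x \<in> l2" "nsq x \<le> 1" by blast
    hence "qf F x \<le> K * nsq x" "nsq x \<le> 1" "0 \<le> nsq x" "z = qf F x" using bd nsq_nonneg by auto
    moreover have "K * nsq x \<le> \<bar>K\<bar> * nsq x" using \<open>0 \<le> nsq x\<close> by (rule mult_right_mono[OF abs_ge_self])
    moreover have "\<bar>K\<bar> * nsq x \<le> \<bar>K\<bar>" using \<open>nsq x \<le> 1\<close> by (rule mult_left_le[OF _ abs_ge_zero])
    ultimately show "z \<le> \<bar>K\<bar>" by linarith
  qed
  show le: "\<And>x. x \<in> l2 \<Longrightarrow> nsq x \<le> 1 \<Longrightarrow> qf F x \<le> mu F"
    unfolding mu_def by (rule cSup_upper[OF _ b]) auto
  have "qf F (\<lambda>_. 0) = 0" using sesq_zero2[OF F l2_zero] by (simp add: qf_def)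
  moreover have "nsq (\<lambda>_. 0) = 0" by (simp add: nsq_def)
  ultimately show "0 \<le> mu F" using le[of "\<lambda>_. 0"] by simp
qed

lemma mu_bound: assumes "good F K t" "w \<in> l2" shows "qf F w \<le> mu F * nsq w"
proof (cases "nsq w = 0")
  case True
  have "qf F w \<le> K * nsq w" using assms by (auto simp: good_def)
  thus ?thesis using True by simp
next
  case False
  hence pos: "nsq w > 0" using nsq_nonneg[of w] by simp
  have F: "sesq F" using assms by (simp add: good_def)
  define c where "c = complex_of_real (1 / sqrt (nsq w))"
  have "cmod c = 1 / sqrt (nsq w)" unfolding c_def using pos by (simp only: norm_of_real) simp
  hence cm: "(cmod c)^2 = 1 / nsq w" using pos by (simp add: power_divide)
  have l: "(\<lambda>a. c * w a) \<in> l2" using l2_scale[OF assms(2)] .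
  have "nsq (\<lambda>a. c * w a) = 1" using nsq_scale[OF assms(2)] cm pos by simp
  hence "qf F (\<lambda>a. c * w a) \<le> mu F" using mu_facts(3)[OF assms(1) l] by simp
  hence "qf F w / nsq w \<le> mu F" using qf_scale[OF F assms(2)] cm by simp
  thus ?thesis using pos by (simp add: field_simps)
qed

lemma mu_attained: assumes "good F K t" "mu F > 0"
  shows "\<exists>v\<in>l2. nsq v = 1 \<and> qf F v = mu F"
proof -
  have F: "sesq F" using assms by (simp add: good_def)
  define \<mu> where "\<mu> = mu F"
  have "\<exists>x. x \<in> l2 \<and> nsq x \<le> 1 \<and> \<mu> - 1 / (real k + 1) < qf F x" for k
  proof -
    have "\<mu> - 1 / (real k + 1) < Sup {qf F x | x. x \<in> l2 \<and> nsq x \<le> 1}"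
      unfolding \<mu>_def mu_def by simp
    moreover have "{qf F x | x. x \<in> l2 \<and> nsq x \<le> 1} \<noteq> {}" using l2_zero
      by (auto intro!: exI[of _ "\<lambda>_. 0"] simp: nsq_def)
    ultimately show ?thesis using less_cSup_iff[OF _ mu_facts(1)[OF assms(1)]] by auto
  qed
  then obtain x where x: "\<And>k. x k \<in> l2" "\<And>k. nsq (x k) \<le> 1" "\<And>k. \<mu> - 1 / (real k + 1) < qf F (x k)"
    by metis
  have "cmod (x k a) \<le> 1" for k a
  proof -
    have "(cmod (x k a))^2 \<le> 1" using coord_le_nsq[OF x(1), of k a] x(2)[of k] by simp
    thus ?thesis by (simp add: power_le_one_iff abs_square_le_1)
  qed
  then obtain r y where r: "strict_mono r" "\<And>a. (\<lambda>k. x (r k) a) \<longlonglongrightarrow> y a"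
    using subseq_pointwise[of x] by blast
  have ybd: "sum (\<lambda>a. (cmod (y a))^2) G \<le> 1" if "finite G" for G
  proof -
    have "(\<lambda>k. sum (\<lambda>a. (cmod (x (r k) a))^2) G) \<longlonglongrightarrow> sum (\<lambda>a. (cmod (y a))^2) G"
      by (intro tendsto_sum tendsto_power tendsto_norm r(2))
    moreover have "sum (\<lambda>a. (cmod (x (r k) a))^2) G \<le> 1" for k
      using finite_sum_le_infsum[OF nsq_summable[OF x(1)] that, of "r k"] x(2)[of "r k"]
      by (simp add: nsq_def)
    ultimately show ?thesis by (intro tendsto_upperbound) (auto intro: always_eventually)
  qed
  have yl2: "y \<in> l2" unfolding l2_def mem_Collect_eq
    by (rule nonneg_bdd_above_summable_on) (auto intro!: bdd_aboveI2 ybd)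
  have ynsq: "nsq y \<le> 1" unfolding nsq_def
    by (rule infsum_le_finite_sums[OF nsq_summable[OF yl2]]) (simp add: ybd)
  define u where "u k = (\<lambda>a. x (r k) a - y a)" for k
  have ul2: "u k \<in> l2" for k unfolding u_def by (rule l2_diff[OF x(1) yl2])
  have unsq: "nsq (u k) \<le> 4" for k unfolding u_def by (rule nsq_diff_le[OF x(1) yl2 x(2) ynsq])
  have u0: "(\<lambda>k. u k a) \<longlonglongrightarrow> 0" for a
    unfolding u_def using tendsto_diff[OF r(2)[of a] tendsto_const[of "y a"]] by simp
  have qu: "(\<lambda>k. qf F (u k)) \<longlonglongrightarrow> 0" by (rule q_weak[OF assms(1) ul2 unsq u0])
  have xeq: "x (r k) = (\<lambda>a. y a + 1 * u k a)" for k by (simp add: u_def)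
  have qx: "qf F (x (r k)) = qf F y + 2 * Re (F y (u k)) + qf F (u k)" for k
    using qf_expand[OF F yl2 ul2, of 1] xeq[of k] by simp
  have cross: "(\<lambda>k. Re (F y (u k))) \<longlonglongrightarrow> 0"
  proof (rule tendsto_sandwich[where f="\<lambda>k. - (pf F y * pf F (u k))" and h="\<lambda>k. pf F y * pf F (u k)"])
    have pu: "(\<lambda>k. pf F (u k)) \<longlonglongrightarrow> 0" unfolding pf_def using tendsto_real_sqrt[OF qu] by simp
    show "(\<lambda>k. pf F y * pf F (u k)) \<longlonglongrightarrow> 0" using tendsto_mult_right_zero[OF pu] by simp
    thus "(\<lambda>k. - (pf F y * pf F (u k))) \<longlonglongrightarrow> 0" using tendsto_minus by fastforce
    have hb: "\<bar>Re (F y (u k))\<bar> \<le> pf F y * pf F (u k)" for k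
      using abs_Re_le_cmod[of "F y (u k)"] sesq_cs'[OF F ul2 yl2, of k] by linarith
    show "\<forall>\<^sub>F k in sequentially. - (pf F y * pf F (u k)) \<le> Re (F y (u k))"
    proof (intro always_eventually allI)
      fix k show "- (pf F y * pf F (u k)) \<le> Re (F y (u k))" using abs_le_D2[OF hb[of k]] by (simp add: minus_le_iff)
    qed
    show "\<forall>\<^sub>F k in sequentially. Re (F y (u k)) \<le> pf F y * pf F (u k)"
    proof (intro always_eventually allI)
      fix k show "Re (F y (u k)) \<le> pf F y * pf F (u k)" using abs_le_D1[OF hb[of k]] .
    qed
  qed
  have lim1: "(\<lambda>k. qf F (x (r k))) \<longlonglongrightarrow> qf F y"
    unfolding qx using tendsto_add[OF tendsto_add[OF tendsto_const[of "qf F y"] tendsto_mult_right_zero[OF cross, of 2]] qu]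
    by simp
  have lim2: "(\<lambda>k. qf F (x (r k))) \<longlonglongrightarrow> \<mu>"
  proof (rule tendsto_sandwich[where f="\<lambda>k. \<mu> - 1 / (real (r k) + 1)" and h="\<lambda>_. \<mu>"])
    show "\<forall>\<^sub>F k in sequentially. \<mu> - 1 / (real (r k) + 1) \<le> qf F (x (r k))"
    proof (intro always_eventually allI)
      fix k show "\<mu> - 1 / (real (r k) + 1) \<le> qf F (x (r k))" using x(3)[of "r k"] by (rule less_imp_le)
    qed
    show "\<forall>\<^sub>F k in sequentially. qf F (x (r k)) \<le> \<mu>"
    proof (intro always_eventually allI)
      fix k show "qf F (x (r k)) \<le> \<mu>" using mu_facts(3)[OF assms(1) x(1) x(2)] by (simp add: \<mu>_def)
    qed
    have "(\<lambda>k. 1 / (real (r k) + 1)) \<longlonglongrightarrow> 0"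
      using LIMSEQ_subseq_LIMSEQ[OF LIMSEQ_inverse_real_of_nat r(1)]
      by (simp add: o_def inverse_eq_divide add.commute)
    thus "(\<lambda>k. \<mu> - 1 / (real (r k) + 1)) \<longlonglongrightarrow> \<mu>" using tendsto_diff[OF tendsto_const[of \<mu>]] by force
  qed simp
  have qy: "qf F y = \<mu>" using LIMSEQ_unique[OF lim1 lim2] .
  have "nsq y = 1"
  proof -
    have "\<mu> \<le> \<mu> * nsq y" using mu_bound[OF assms(1) yl2] qy by (simp add: \<mu>_def)
    hence "1 \<le> nsq y" using assms(2) by (simp add: \<mu>_def)
    thus ?thesis using ynsq by simp
  qed
  thus ?thesis using yl2 qy by (auto simp: \<mu>_def)
qed


lemma mu_eigen: assumes "good F K t" "v \<in> l2" "nsq v = 1" "qf F v = mu F" "y \<in> l2"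
  shows "F y v = complex_of_real (mu F) * cinner y v"
proof -
  have F: "sesq F" using assms by (simp add: good_def)
  define \<mu> where "\<mu> = mu F"
  define e where "e = F y v - complex_of_real \<mu> * cinner y v"
  define M where "M = \<mu> * nsq y - qf F y"
  define t :: real where "t = 1 / (\<bar>M\<bar> + 1)"
  have t: "t > 0" by (simp add: t_def)
  define s where "s = complex_of_real t * e"
  have ce: "F v y - complex_of_real \<mu> * cinner v y = cnj e"
    unfolding e_def using sesq_herm[OF F assms(2,5)] cinner_cnj[of v y] by simp
  have w: "(\<lambda>a. v a + s * y a) \<in> l2" using assms by (simp add: l2_lin)
  have "qf F (\<lambda>a. v a + s * y a) \<le> \<mu> * nsq (\<lambda>a. v a + s * y a)"
    using mu_bound[OF assms(1) w] by (simp add: \<mu>_def)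
  moreover have "qf F (\<lambda>a. v a + s * y a) = \<mu> + 2 * Re (s * F v y) + (cmod s)^2 * qf F y"
    using qf_expand[OF F assms(2,5), of s] assms(4) by (simp add: \<mu>_def)
  moreover have "nsq (\<lambda>a. v a + s * y a) = 1 + 2 * Re (s * cinner v y) + (cmod s)^2 * nsq y"
    using qf_expand[OF sesq_cinner assms(2,5), of s] assms(3) w assms(2,5) by (simp add: nsq_qf)
  ultimately have "2 * Re (s * F v y) - 2 * \<mu> * Re (s * cinner v y) \<le> (cmod s)^2 * M"
    by (simp add: M_def algebra_simps)
  moreover have "Re (s * F v y) - \<mu> * Re (s * cinner v y) = Re (s * (F v y - complex_of_real \<mu> * cinner v y))"
    by (simp add: algebra_simps)
  ultimately have "2 * Re (s * cnj e) \<le> (cmod s)^2 * M" unfolding ce by linarith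
  moreover have "s * cnj e = complex_of_real (t * (cmod e)^2)"
  proof -
    have "e * cnj e = complex_of_real ((cmod e)^2)" by (metis complex_norm_square)
    thus ?thesis unfolding s_def by (metis mult.assoc of_real_mult)
  qed
  moreover have "(cmod s)^2 = t^2 * (cmod e)^2" unfolding s_def using t
    by (simp add: norm_mult power_mult_distrib)
  ultimately have "2 * (t * (cmod e)^2) \<le> t^2 * (cmod e)^2 * M" by simp
  hence "t * (2 * (cmod e)^2) \<le> t * ((t * M) * (cmod e)^2)"
    by (simp add: power2_eq_square mult_ac)
  hence "2 * (cmod e)^2 \<le> (t * M) * (cmod e)^2" using t by (rule mult_left_le_imp_le)
  moreover have "t * M \<le> 1"
  proof -
    have "t * M \<le> t * \<bar>M\<bar>" using t by (simp add: mult_left_mono)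
    also have "\<dots> \<le> 1" unfolding t_def by (simp add: field_simps)
    finally show ?thesis .
  qed
  hence "(t * M) * (cmod e)^2 \<le> 1 * (cmod e)^2" by (rule mult_right_mono) simp
  ultimately have "2 * (cmod e)^2 \<le> (cmod e)^2" by linarith
  hence "e = 0" by simp
  thus ?thesis by (simp add: e_def \<mu>_def)
qed


lemma infsum_point: "(\<Sum>\<^sub>\<infinity>b. (if b = a then c else 0 :: 'b :: {comm_monoid_add, t2_space})) = c"
proof -
  have "(\<Sum>\<^sub>\<infinity>b. (if b = a then c else 0 :: 'b)) = infsum (\<lambda>_. c) {a}"
    by (rule infsum_cong_neutral) auto
  thus ?thesis by simp
qed

lemma cinner_basis1: "cinner (basis a) x = x a"
proof -
  have "(\<lambda>b. cnj (basis a b) * x b) = (\<lambda>b. if b = a then x a else 0)"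
    by (auto simp: basis_def)
  thus ?thesis unfolding cinner_def using infsum_point[of a "x a"] by simp
qed

lemma cinner_basis2: "cinner x (basis a) = cnj (x a)"
  using cinner_basis1[of a x] cinner_cnj[of x "basis a"] by simp

definition defl :: "(vec \<Rightarrow> vec \<Rightarrow> complex) \<Rightarrow> real \<Rightarrow> vec \<Rightarrow> vec \<Rightarrow> vec \<Rightarrow> complex" where
  "defl F m v = (\<lambda>y x. F y x - complex_of_real m * (cinner y v * cinner v x))"

lemma cinner_prod_cnj: "cinner x v * cinner v x = complex_of_real ((cmod (cinner v x))^2)"
proof -
  have "cinner x v = cnj (cinner v x)" by (rule cinner_cnj)
  thus ?thesis by (metis complex_norm_square mult.commute)
qed

lemma defl_good: assumes "good F K t" "v \<in> l2" "nsq v = 1" "qf F v = mu F" "mu F > 0"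
  shows "good (defl F (mu F) v) K (t - mu F)"
proof -
  have F: "sesq F" and bd: "\<forall>x\<in>l2. qf F x \<le> K * nsq x" and tr: "(diag F has_sum t) UNIV"
    using assms(1) by (auto simp: good_def)
  define \<mu> where "\<mu> = mu F"
  define G where "G = defl F \<mu> v"
  have eig: "\<And>y. y \<in> l2 \<Longrightarrow> F y v = complex_of_real \<mu> * cinner y v"
    using mu_eigen[OF assms(1-4)] by (simp add: \<mu>_def)
  have qG: "qf G x = qf F x - \<mu> * (cmod (cinner v x))^2" for x
    unfolding G_def defl_def qf_def using cinner_prod_cnj[of x v] by simp
  have lin: "G z (\<lambda>a. x a + c * y a) = G z x + c * G z y" if "x \<in> l2" "y \<in> l2" "z \<in> l2" for x y z c
    unfolding G_def defl_def using sesq_lin2[OF F that] cinner_lin2[OF that(1,2) assms(2)]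
    by (simp add: algebra_simps)
  have herm: "G x y = cnj (G y x)" if "x \<in> l2" "y \<in> l2" for x y
    unfolding G_def defl_def using sesq_herm[OF F that] cinner_cnj[of x v] cinner_cnj[of v y]
    by simp
  have pos: "0 \<le> qf G x" if x: "x \<in> l2" for x
  proof -
    define c where "c = cinner v x"
    define xp where "xp = (\<lambda>a. x a + (- c) * v a)"
    have xp: "xp \<in> l2" unfolding xp_def using l2_lin[OF x assms(2)] .
    have vv: "cinner v v = 1" using cinner_self_nsq[OF assms(2)] assms(3) by simp
    have "cinner xp v = cinner x v + cnj (- c) * cinner v v"
      unfolding xp_def by (rule cinner_lin1[OF x assms(2) assms(2)])
    hence o: "cinner xp v = 0" using vv cinner_cnj[of x v] by (simp add: c_def)
    have xe: "x = (\<lambda>a. xp a + c * v a)" by (simp add: xp_def)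
    have "qf F x = qf F xp + 2 * Re (c * F xp v) + (cmod c)^2 * qf F v"
      by (subst xe, rule qf_expand[OF F xp assms(2)])
    also have "F xp v = 0" using eig[OF xp] o by simp
    finally have "qf F x = qf F xp + (cmod c)^2 * \<mu>" using assms(4) by (simp add: \<mu>_def)
    hence "qf G x = qf F xp" using qG[of x] by (simp add: c_def)
    thus ?thesis using qf_nonneg[OF F xp] by simp
  qed
  have sG: "sesq G" unfolding sesq_def
  proof (intro conjI ballI allI)
    show "G z (\<lambda>a. x a + c * y a) = G z x + c * G z y" if "x \<in> l2" "y \<in> l2" "z \<in> l2" for x y z c
      using lin[OF that] .
    show "G x y = cnj (G y x)" if "x \<in> l2" "y \<in> l2" for x y using herm[OF that] .
    show "0 \<le> Re (G x x)" if "x \<in> l2" for x using pos[OF that] by (simp add: qf_def)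
  qed
  have bG: "\<forall>x\<in>l2. qf G x \<le> K * nsq x"
  proof
    fix x assume "x \<in> l2"
    have "qf G x \<le> qf F x" using qG[of x] assms(5) by (simp add: \<mu>_def)
    moreover have "qf F x \<le> K * nsq x" using bd \<open>x \<in> l2\<close> by blast
    ultimately show "qf G x \<le> K * nsq x" by linarith
  qed
  have dG: "diag G a = diag F a + (- \<mu>) * (cmod (v a))^2" for a
  proof -
    have "v a * cnj (v a) = complex_of_real ((cmod (v a))^2)" by (metis complex_norm_square)
    thus ?thesis unfolding diag_def G_def defl_def cinner_basis1 cinner_basis2 by simp
  qed
  have "((\<lambda>a. diag F a + (- \<mu>) * (cmod (v a))^2) has_sum (t + (- \<mu>) * nsq v)) UNIV"
    by (intro has_sum_add tr has_sum_cmult_right)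
       (simp add: nsq_def nsq_summable[OF assms(2)])
  moreover have "diag G = (\<lambda>a. diag F a + (- \<mu>) * (cmod (v a))^2)" using dG by (rule ext)
  ultimately have "(diag G has_sum (t - \<mu>)) UNIV" using assms(3) by simp
  thus ?thesis using sG bG by (simp add: good_def G_def \<mu>_def)
qed




definition vec_of :: "(vec \<Rightarrow> vec \<Rightarrow> complex) \<Rightarrow> vec" where
  "vec_of F = (SOME v. v \<in> l2 \<and> nsq v = 1 \<and> qf F v = mu F)"

definition nxt :: "(vec \<Rightarrow> vec \<Rightarrow> complex) \<Rightarrow> (vec \<Rightarrow> vec \<Rightarrow> complex)" where
  "nxt F = (if mu F > 0 then defl F (mu F) (vec_of F) else F)"

lemma vec_of: assumes "good F K t" "mu F > 0"
  shows "vec_of F \<in> l2" "nsq (vec_of F) = 1" "qf F (vec_of F) = mu F"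
proof -
  have "\<exists>v. v \<in> l2 \<and> nsq v = 1 \<and> qf F v = mu F" using mu_attained[OF assms] by blast
  hence "vec_of F \<in> l2 \<and> nsq (vec_of F) = 1 \<and> qf F (vec_of F) = mu F"
    unfolding vec_of_def by (rule someI_ex)
  thus "vec_of F \<in> l2" "nsq (vec_of F) = 1" "qf F (vec_of F) = mu F" by auto
qed

lemma nxt_good: assumes "good F K t" shows "good (nxt F) K (t - mu F)"
proof (cases "mu F > 0")
  case True
  thus ?thesis using defl_good[OF assms vec_of[OF assms True] True] by (simp add: nxt_def)
next
  case False
  hence "mu F = 0" using mu_facts(2)[OF assms] by simp
  thus ?thesis using assms False by (simp add: nxt_def)
qed

locale iter =
  fixes F0 :: "vec \<Rightarrow> vec \<Rightarrow> complex" and K t :: real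
  assumes good0: "good F0 K t"
begin

definition Fn :: "nat \<Rightarrow> vec \<Rightarrow> vec \<Rightarrow> complex" where "Fn n = (nxt ^^ n) F0"
definition lam :: "nat \<Rightarrow> real" where "lam n = mu (Fn n)"
definition psi :: "nat \<Rightarrow> vec" where "psi n = vec_of (Fn n)"

lemma Fn_Suc: "Fn (Suc n) = nxt (Fn n)" by (simp add: Fn_def)

lemma Fn_good: "good (Fn n) K (t - (\<Sum>i<n. lam i))"
proof (induction n)
  case 0 thus ?case using good0 by (simp add: Fn_def)
next
  case (Suc n)
  from nxt_good[OF Suc] show ?case by (simp add: Fn_Suc lam_def algebra_simps)
qed

lemma lam_nonneg: "0 \<le> lam n" unfolding lam_def using mu_facts(2)[OF Fn_good] .

lemma psi: assumes "lam n > 0" shows "psi n \<in> l2" "nsq (psi n) = 1" "qf (Fn n) (psi n) = lam n"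
  using vec_of[OF Fn_good assms[unfolded lam_def]] by (auto simp: psi_def lam_def)

lemma psi_eig: assumes "lam n > 0" "y \<in> l2" shows "Fn n y (psi n) = complex_of_real (lam n) * cinner y (psi n)"
  using mu_eigen[OF Fn_good psi(1,2)[OF assms(1)] psi(3)[OF assms(1), unfolded lam_def] assms(2)] by (simp add: lam_def)

lemma Fn_Suc_eq: "Fn (Suc n) y x = Fn n y x - complex_of_real (lam n) * (cinner y (psi n) * cinner (psi n) x)"
  using lam_nonneg[of n] by (auto simp: Fn_Suc nxt_def defl_def lam_def psi_def)

lemma Fn_eq: "Fn n y x = F0 y x - (\<Sum>i<n. complex_of_real (lam i) * (cinner y (psi i) * cinner (psi i) x))"
  by (induction n) (simp_all add: Fn_def[of 0] Fn_Suc_eq)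

lemma tr_nonneg: "0 \<le> t - (\<Sum>i<n. lam i)"
proof -
  have F: "sesq (Fn n)" and h: "(diag (Fn n) has_sum (t - (\<Sum>i<n. lam i))) UNIV"
    using Fn_good[of n] by (auto simp: good_def)
  show ?thesis using has_sum_nonneg[OF h] diag_nonneg[OF F] by blast
qed

lemma lam_summable: "summable lam"
  using lam_nonneg tr_nonneg by (intro summableI_nonneg_bounded[where x=t]) (auto simp: algebra_simps)

lemma lam_tendsto: "lam \<longlonglongrightarrow> 0" using summable_LIMSEQ_zero[OF lam_summable] .

lemma Fn_killed: assumes "lam i > 0" "i < j" "y \<in> l2" shows "Fn j y (psi i) = 0"
  using assms(2,3)
proof (induction j arbitrary: y)
  case 0 thus ?case by simp
next
  case (Suc j)
  show ?case
  proof (cases "i = j")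
    case True
    have "cinner (psi i) (psi i) = 1" using cinner_self_nsq[OF psi(1)[OF assms(1)]] psi(2)[OF assms(1)] by simp
    thus ?thesis using True Fn_Suc_eq[of j y "psi i"] psi_eig[OF assms(1) Suc.prems(2)] by simp
  next
    case False
    hence ij: "i < j" using Suc.prems by simp
    show ?thesis
    proof (cases "lam j > 0")
      case True
      have "Fn j (psi i) (psi j) = complex_of_real (lam j) * cinner (psi i) (psi j)"
        by (rule psi_eig[OF True psi(1)[OF assms(1)]])
      moreover have "Fn j (psi i) (psi j) = cnj (Fn j (psi j) (psi i))"
        using Fn_good[of j] psi(1)[OF assms(1)] psi(1)[OF True] by (auto simp: good_def intro: sesq_herm)
      moreover have "Fn j (psi j) (psi i) = 0" using Suc.IH[OF ij psi(1)[OF True]] .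
      ultimately have "cinner (psi i) (psi j) = 0" using True by simp
      hence "cinner (psi j) (psi i) = 0" using cinner_cnj[of "psi j" "psi i"] by simp
      thus ?thesis using Fn_Suc_eq[of j y "psi i"] Suc.IH[OF ij Suc.prems(2)] by simp
    next
      case False
      hence "lam j = 0" using lam_nonneg[of j] by simp
      thus ?thesis using Fn_Suc_eq[of j y "psi i"] Suc.IH[OF ij Suc.prems(2)] by simp
    qed
  qed
qed

lemma psi_orth: assumes "lam i > 0" "lam j > 0" "i < j" shows "cinner (psi i) (psi j) = 0"
proof -
  have "Fn j (psi i) (psi j) = complex_of_real (lam j) * cinner (psi i) (psi j)"
    by (rule psi_eig[OF assms(2) psi(1)[OF assms(1)]])
  moreover have "Fn j (psi i) (psi j) = cnj (Fn j (psi j) (psi i))"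
    using Fn_good[of j] psi(1)[OF assms(1)] psi(1)[OF assms(2)] by (auto simp: good_def intro: sesq_herm)
  moreover have "Fn j (psi j) (psi i) = 0" using Fn_killed[OF assms(1,3) psi(1)[OF assms(2)]] .
  ultimately show ?thesis using assms(2) by simp
qed

lemma orthonormal: "orthonormal_on {i. lam i > 0} psi"
  unfolding orthonormal_on_def
proof (intro conjI ballI)
  fix i assume "i \<in> {i. lam i > 0}" thus "psi i \<in> l2" using psi(1) by simp
next
  fix i j assume i: "i \<in> {i. lam i > 0}" and j: "j \<in> {i. lam i > 0}"
  show "cinner (psi i) (psi j) = (if i = j then 1 else 0)"
  proof (cases i j rule: linorder_cases)
    case less thus ?thesis using psi_orth i j by simp
  next
    case equal thus ?thesis using cinner_self_nsq[OF psi(1)] psi(2) i by simp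
  next
    case greater
    hence "cinner (psi j) (psi i) = 0" using psi_orth i j by simp
    thus ?thesis using cinner_cnj[of "psi i" "psi j"] greater by simp
  qed
qed

lemma pf_bound: assumes "x \<in> l2" shows "pf (Fn n) x \<le> sqrt (lam n) * sqrt (nsq x)"
proof -
  have "qf (Fn n) x \<le> lam n * nsq x" using mu_bound[OF Fn_good assms] by (simp add: lam_def)
  hence "pf (Fn n) x \<le> sqrt (lam n * nsq x)" unfolding pf_def by simp
  thus ?thesis by (simp add: real_sqrt_mult)
qed

lemma Fn_bound: assumes "x \<in> l2" "y \<in> l2"
  shows "cmod (Fn n y x) \<le> lam n * (sqrt (nsq y) * sqrt (nsq x))"
proof -
  have F: "sesq (Fn n)" using Fn_good[of n] by (simp add: good_def)
  have "cmod (Fn n y x) \<le> pf (Fn n) y * pf (Fn n) x" by (rule sesq_cs'[OF F assms])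
  also have "\<dots> \<le> (sqrt (lam n) * sqrt (nsq y)) * (sqrt (lam n) * sqrt (nsq x))"
    by (intro mult_mono pf_bound assms pf_nonneg[OF F]) (auto simp: lam_nonneg nsq_nonneg)
  also have "\<dots> = (sqrt (lam n) * sqrt (lam n)) * (sqrt (nsq y) * sqrt (nsq x))"
    by (simp only: mult_ac)
  also have "sqrt (lam n) * sqrt (lam n) = lam n" using lam_nonneg[of n] by simp
  finally show ?thesis .
qed

lemma representation: assumes "x \<in> l2" "y \<in> l2"
  shows "F0 y x = (\<Sum>\<^sub>\<infinity>i\<in>{i. lam i > 0}. complex_of_real (lam i) * (cinner y (psi i) * cinner (psi i) x))"
proof -
  define g where "g i = complex_of_real (lam i) * (cinner y (psi i) * cinner (psi i) x)" for i
  define C where "C = sqrt (nsq y) * sqrt (nsq x)"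
  have g0: "g i = 0" if "\<not> lam i > 0" for i using that lam_nonneg[of i] by (simp add: g_def)
  have gb: "norm (g i) \<le> lam i * C" for i
  proof (cases "lam i > 0")
    case True
    have "cmod (cinner y (psi i)) \<le> l2norm y * l2norm (psi i)" by (rule cinner_cs[OF psi(1)[OF True] assms(2)])
    moreover have "cmod (cinner (psi i) x) \<le> l2norm (psi i) * l2norm x" by (rule cinner_cs[OF assms(1) psi(1)[OF True]])
    ultimately have "cmod (cinner y (psi i)) * cmod (cinner (psi i) x) \<le> C"
      using psi(2)[OF True] nsq_nonneg[of y] unfolding C_def l2norm_nsq
      by (intro mult_mono) auto
    hence "cmod (cinner y (psi i) * cinner (psi i) x) \<le> C" by (simp add: norm_mult)
    thus ?thesis unfolding g_def using lam_nonneg[of i] by (simp add: norm_mult mult_left_mono)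
  next
    case False thus ?thesis using g0[OF False] lam_nonneg[of i] by (simp add: C_def)
  qed
  have ls: "(\<lambda>i. lam i * C) summable_on UNIV"
    by (intro summable_on_cmult_left summable_nonneg_imp_summable_on lam_summable lam_nonneg)
  have "(\<lambda>i. norm (g i)) summable_on UNIV"
    by (rule summable_on_comparison_test[OF ls]) (auto simp: gb)
  hence gs: "g summable_on UNIV" by (rule abs_summable_summable)
  hence "g sums (infsum g UNIV)" by (intro has_sum_imp_sums) simp
  hence lim1: "(\<lambda>n. \<Sum>i<n. g i) \<longlonglongrightarrow> infsum g UNIV" by (simp add: sums_def)
  have "(\<lambda>n. F0 y x - Fn n y x) \<longlonglongrightarrow> F0 y x"
  proof -
    have "(\<lambda>n. lam n * C) \<longlonglongrightarrow> 0" using tendsto_mult_left_zero[OF lam_tendsto] by simp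
    hence "(\<lambda>n. Fn n y x) \<longlonglongrightarrow> 0"
      by (rule Lim_null_comparison[rotated]) (use Fn_bound[OF assms(1,2)] in \<open>simp add: C_def\<close>)
    from tendsto_diff[OF tendsto_const this] show ?thesis by simp
  qed
  moreover have "(\<lambda>n. F0 y x - Fn n y x) = (\<lambda>n. \<Sum>i<n. g i)"
    by (simp add: Fn_eq g_def)
  ultimately have "infsum g UNIV = F0 y x" using lim1 LIMSEQ_unique by metis
  moreover have "infsum g {i. lam i > 0} = infsum g UNIV"
    by (rule infsum_cong_neutral) (auto simp: g0)
  ultimately show ?thesis unfolding g_def[abs_def] by simp
qed

lemma lam_summable_on: "lam summable_on {i. lam i > 0}"
  using summable_on_subset_banach[OF summable_nonneg_imp_summable_on[OF lam_summable lam_nonneg]] by blast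

lemma diag_Fn_le: "diag (Fn n) a \<le> diag F0 a"
proof -
  have "diag (Fn n) a = diag F0 a - (\<Sum>i<n. lam i * (cmod (psi i a))^2)"
  proof -
    have "cinner (basis a) (psi i) * cinner (psi i) (basis a) = complex_of_real ((cmod (psi i a))^2)" for i
      unfolding cinner_basis1 cinner_basis2 by (metis complex_norm_square)
    thus ?thesis unfolding diag_def Fn_eq by (simp add: Re_sum)
  qed
  moreover have "0 \<le> (\<Sum>i<n. lam i * (cmod (psi i a))^2)" by (intro sum_nonneg mult_nonneg_nonneg lam_nonneg) simp
  ultimately show ?thesis by linarith
qed

lemma psi_supp: assumes "lam i > 0" "diag F0 a = 0" shows "psi i a = 0"
proof -
  have F: "sesq (Fn i)" using Fn_good[of i] by (simp add: good_def)
  have "diag (Fn i) a = 0" using diag_Fn_le[of i a] diag_nonneg[OF F, of a] assms(2) by simp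
  hence "pf (Fn i) (basis a) = 0" by (simp add: pf_def qf_def diag_def)
  hence "cmod (Fn i (basis a) (psi i)) \<le> 0"
    using sesq_cs'[OF F psi(1)[OF assms(1)] l2_basis[of a]] by simp
  hence "Fn i (basis a) (psi i) = 0" by simp
  thus ?thesis using psi_eig[OF assms(1) l2_basis] assms(1) by (simp add: cinner_basis1)
qed

end



lemma polar:
  assumes lin2: "\<And>x y z c. x \<in> l2 \<Longrightarrow> y \<in> l2 \<Longrightarrow> z \<in> l2 \<Longrightarrow> G z (\<lambda>a. x a + c * y a) = G z x + c * G z y"
    and lin1: "\<And>x y z c. x \<in> l2 \<Longrightarrow> y \<in> l2 \<Longrightarrow> z \<in> l2 \<Longrightarrow> G (\<lambda>a. x a + c * y a) z = G x z + cnj c * G y z"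
    and re: "\<And>u. u \<in> l2 \<Longrightarrow> Im (G u u) = 0"
    and x: "x \<in> l2" and y: "y \<in> l2"
  shows "G x y = cnj (G y x)"
proof -
  have E: "G (\<lambda>a. x a + s * y a) (\<lambda>a. x a + s * y a) = G x x + s * G x y + cnj s * G y x + cnj s * s * G y y" for s
  proof -
    have w: "(\<lambda>a. x a + s * y a) \<in> l2" using x y by (rule l2_lin)
    show ?thesis using lin1[OF x y w, of s] lin2[OF x y x, of s] lin2[OF x y y, of s]
      by (simp add: algebra_simps)
  qed
  have A: "Im (G x y + G y x) = 0"
    using E[of 1] re[OF l2_lin[OF x y, of 1]] re[OF x] re[OF y] by simp
  have B: "Re (G x y) - Re (G y x) = 0"
    using E[of \<i>] re[OF l2_lin[OF x y, of \<i>]] re[OF x] re[OF y] by simp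
  show ?thesis using A B by (simp add: complex_eq_iff)
qed

definition opform :: "(vec \<Rightarrow> vec) \<Rightarrow> vec \<Rightarrow> vec \<Rightarrow> complex" where
  "opform T = (\<lambda>y x. cinner y (T x))"

lemma state_good: assumes "normal_state T" shows "\<exists>K. good (opform T) K 1"
proof -
  have bo: "bounded_op T" and po: "positive_op T"
    and tr: "((\<lambda>a. Re (cinner (basis a) (T (basis a)))) has_sum 1) UNIV"
    using assms by (auto simp: normal_state_def)
  have Tl2: "\<And>x. x \<in> l2 \<Longrightarrow> T x \<in> l2" using bo by (simp add: bounded_op_def)
  have Tlin: "\<And>x y c. x \<in> l2 \<Longrightarrow> y \<in> l2 \<Longrightarrow> T (\<lambda>a. x a + c * y a) = (\<lambda>a. T x a + c * T y a)"
    using bo by (simp add: bounded_op_def)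
  obtain K where K: "\<And>x. x \<in> l2 \<Longrightarrow> l2norm (T x) \<le> K * l2norm x" using bo unfolding bounded_op_def by blast
  define G where "G = opform T"
  have lin2: "G z (\<lambda>a. x a + c * y a) = G z x + c * G z y" if "x \<in> l2" "y \<in> l2" "z \<in> l2" for x y z c
    unfolding G_def opform_def using Tlin[OF that(1,2)] cinner_lin2[OF Tl2[OF that(1)] Tl2[OF that(2)] that(3)] by simp
  have lin1: "G (\<lambda>a. x a + c * y a) z = G x z + cnj c * G y z" if "x \<in> l2" "y \<in> l2" "z \<in> l2" for x y z c
    unfolding G_def opform_def using cinner_lin1[OF that(1,2) Tl2[OF that(3)]] by simp
  have re: "Im (G u u) = 0" if "u \<in> l2" for u
    using po that unfolding positive_op_def G_def opform_def by (auto simp: complex_is_Real_iff)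
  have sG: "sesq G" unfolding sesq_def
  proof (intro conjI ballI allI)
    show "G z (\<lambda>a. x a + c * y a) = G z x + c * G z y" if "x \<in> l2" "y \<in> l2" "z \<in> l2" for x y z c
      using lin2[OF that] .
    show "G x y = cnj (G y x)" if "x \<in> l2" "y \<in> l2" for x y
      by (rule polar[OF lin2 lin1 re that]) auto
    show "0 \<le> Re (G x x)" if "x \<in> l2" for x using po that by (simp add: positive_op_def G_def opform_def)
  qed
  have bd: "\<forall>x\<in>l2. qf G x \<le> K * nsq x"
  proof
    fix x assume x: "x \<in> l2"
    have "qf G x \<le> cmod (cinner x (T x))" unfolding qf_def G_def opform_def by (rule complex_Re_le_cmod)
    also have "\<dots> \<le> l2norm x * l2norm (T x)" by (rule cinner_cs[OF Tl2[OF x] x])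
    also have "\<dots> \<le> l2norm x * (K * l2norm x)"
      by (rule mult_left_mono[OF K[OF x]]) (simp add: l2norm_nsq nsq_nonneg)
    also have "\<dots> = K * nsq x" using nsq_nonneg[of x] by (simp add: l2norm_nsq)
    finally show "qf G x \<le> K * nsq x" .
  qed
  have "diag G = (\<lambda>a. Re (cinner (basis a) (T (basis a))))"
    by (rule ext) (simp add: diag_def G_def opform_def)
  hence "(diag G has_sum 1) UNIV" using tr by simp
  thus ?thesis using sG bd by (auto simp: good_def G_def)
qed




lemma ennreal_has_sum: fixes g :: "'a \<Rightarrow> real"
  assumes "(g has_sum s) UNIV" "\<And>a. 0 \<le> g a"
  shows "((\<lambda>a. ennreal (g a)) has_sum ennreal s) UNIV"
proof -
  have "((ennreal \<circ> g) has_sum ennreal s) UNIV"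
  proof (rule has_sum_comm_additive_general[OF _ _ assms(1)])
    show "sum (ennreal \<circ> g) F = ennreal (sum g F)" for F
      using sum_ennreal[of F g] assms(2) by (simp add: o_def)
    show "ennreal \<midarrow>s\<rightarrow> ennreal s" by (intro tendsto_ennrealI tendsto_ident_at)
  qed
  thus ?thesis by (simp add: o_def)
qed

lemma moment_bound:
  assumes "\<epsilon> > 0" "C > 0" "normal_state \<rho>"
    and z: "\<And>a. fst a > nat \<lfloor>C / \<epsilon>\<rfloor> \<Longrightarrow> Re (cinner (basis a) (\<rho> (basis a))) = 0"
  shows "moment \<epsilon> \<rho> k \<le> ennreal (C ^ k)"
proof -
  define d where "d a = Re (cinner (basis a) (\<rho> (basis a)))" for a
  have dn: "0 \<le> d a" for a using assms(3) l2_basis[of a]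
    by (auto simp: d_def normal_state_def positive_op_def)
  have tr: "(d has_sum 1) UNIV" using assms(3) by (simp add: normal_state_def d_def[abs_def])
  have le: "(\<epsilon> * real (fst a))^k * d a \<le> C^k * d a" for a
  proof (cases "fst a > nat \<lfloor>C / \<epsilon>\<rfloor>")
    case True thus ?thesis using z[OF True] by (simp add: d_def)
  next
    case False
    hence "real (fst a) \<le> real (nat \<lfloor>C / \<epsilon>\<rfloor>)" by simp
    also have "\<dots> = of_int \<lfloor>C / \<epsilon>\<rfloor>" using assms(1,2) by simp
    also have "\<dots> \<le> C / \<epsilon>" by simp
    finally have "\<epsilon> * real (fst a) \<le> C" using assms(1) by (simp add: field_simps)
    hence "(\<epsilon> * real (fst a))^k \<le> C^k" using assms(1) by (intro power_mono) auto
    thus ?thesis using dn[of a] by (rule mult_right_mono)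
  qed
  have "moment \<epsilon> \<rho> k = (\<Sum>\<^sub>\<infinity>a. ennreal ((\<epsilon> * real (fst a))^k * d a))"
    by (simp add: moment_def d_def)
  also have "\<dots> \<le> (\<Sum>\<^sub>\<infinity>a. ennreal (C^k * d a))"
    by (rule infsum_mono[OF nonneg_summable_on_complete nonneg_summable_on_complete]) (auto intro: ennreal_leI le)
  also have "\<dots> = ennreal (C^k * 1)"
    using ennreal_has_sum[OF has_sum_cmult_right[OF tr, of "C^k"]] dn assms(2)
    by (auto intro: infsumI)
  finally show ?thesis by simp
qed

lemma diag_zero:
  assumes "\<epsilon> > 0" "C > 0" "normal_state \<rho>" "\<And>k. moment \<epsilon> \<rho> k \<le> ennreal (C ^ k)"
    and n: "fst a > nat \<lfloor>C / \<epsilon>\<rfloor>"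
  shows "Re (cinner (basis a) (\<rho> (basis a))) = 0"
proof (rule ccontr)
  define d where "d a = Re (cinner (basis a) (\<rho> (basis a)))" for a
  have dn: "0 \<le> d a" for a using assms(3) l2_basis[of a]
    by (auto simp: d_def normal_state_def positive_op_def)
  assume "Re (cinner (basis a) (\<rho> (basis a))) \<noteq> 0"
  hence dp: "d a > 0" using dn[of a] by (simp add: d_def)
  have "C / \<epsilon> < of_int \<lfloor>C / \<epsilon>\<rfloor> + 1" by linarith
  also have "\<dots> = real (nat \<lfloor>C / \<epsilon>\<rfloor>) + 1" using assms(1,2) by simp
  also have "\<dots> \<le> real (fst a)" using n by linarith
  finally have "C < \<epsilon> * real (fst a)" using assms(1) by (simp add: field_simps)
  hence x1: "\<epsilon> * real (fst a) / C > 1" using assms(2) by simp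
  obtain k where k: "1 / d a < (\<epsilon> * real (fst a) / C)^k" using real_arch_pow[OF x1] by blast
  have "ennreal ((\<epsilon> * real (fst a))^k * d a) \<le> moment \<epsilon> \<rho> k"
  proof -
    have "(\<Sum>\<^sub>\<infinity>b\<in>{a}. ennreal ((\<epsilon> * real (fst b))^k * d b)) \<le> (\<Sum>\<^sub>\<infinity>b. ennreal ((\<epsilon> * real (fst b))^k * d b))"
      by (rule infsum_mono_neutral[OF nonneg_summable_on_complete nonneg_summable_on_complete]) auto
    thus ?thesis by (simp add: moment_def d_def)
  qed
  also have "\<dots> \<le> ennreal (C^k)" by (rule assms(4))
  finally have "(\<epsilon> * real (fst a))^k * d a \<le> C^k"
    using assms(2) by (simp add: ennreal_le_iff)
  moreover have "C^k < (\<epsilon> * real (fst a))^k * d a"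
  proof -
    have "1 < (\<epsilon> * real (fst a) / C)^k * d a" using k dp by (simp add: field_simps)
    hence "C^k < C^k * ((\<epsilon> * real (fst a) / C)^k * d a)" using assms(2) by simp
    also have "\<dots> = (\<epsilon> * real (fst a))^k * d a" using assms(2) by (simp add: power_divide field_simps)
    finally show ?thesis .
  qed
  ultimately show False by simp
qed


theorem lemma10:
  fixes \<rho> :: "real \<Rightarrow> vec \<Rightarrow> vec" and \<epsilon>bar C :: real
  assumes "\<forall>\<epsilon>\<in>{0<..<\<epsilon>bar}. normal_state (\<rho> \<epsilon>)"
    and "C > 0"
  shows "(\<forall>\<epsilon>\<in>{0<..<\<epsilon>bar}. \<forall>k::nat. moment \<epsilon> (\<rho> \<epsilon>) k \<le> ennreal (C ^ k)) \<longleftrightarrow>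
    (\<forall>\<epsilon>\<in>{0<..<\<epsilon>bar}. \<exists>I::nat set. \<exists>\<Psi>::nat \<Rightarrow> vec. \<exists>lam::nat \<Rightarrow> real.
        orthonormal_on I \<Psi> \<and>
        (\<forall>i\<in>I. \<forall>n m. n > nat \<lfloor>C / \<epsilon>\<rfloor> \<longrightarrow> \<Psi> i (n, m) = 0) \<and>
        lam summable_on I \<and> (\<forall>i\<in>I. lam i > 0) \<and>
        (\<forall>x\<in>l2. \<forall>y\<in>l2. cinner y (\<rho> \<epsilon> x) =
            (\<Sum>\<^sub>\<infinity>i\<in>I. complex_of_real (lam i) * (cinner y (\<Psi> i) * cinner (\<Psi> i) x))))"
proof
  assume H: "\<forall>\<epsilon>\<in>{0<..<\<epsilon>bar}. \<forall>k::nat. moment \<epsilon> (\<rho> \<epsilon>) k \<le> ennreal (C ^ k)"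
  show "\<forall>\<epsilon>\<in>{0<..<\<epsilon>bar}. \<exists>I::nat set. \<exists>\<Psi>::nat \<Rightarrow> vec. \<exists>lam::nat \<Rightarrow> real.
        orthonormal_on I \<Psi> \<and>
        (\<forall>i\<in>I. \<forall>n m. n > nat \<lfloor>C / \<epsilon>\<rfloor> \<longrightarrow> \<Psi> i (n, m) = 0) \<and>
        lam summable_on I \<and> (\<forall>i\<in>I. lam i > 0) \<and>
        (\<forall>x\<in>l2. \<forall>y\<in>l2. cinner y (\<rho> \<epsilon> x) =
            (\<Sum>\<^sub>\<infinity>i\<in>I. complex_of_real (lam i) * (cinner y (\<Psi> i) * cinner (\<Psi> i) x)))"
  proof
    fix \<epsilon> assume e: "\<epsilon> \<in> {0<..<\<epsilon>bar}"
    have ns: "normal_state (\<rho> \<epsilon>)" using assms(1) e by blast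
    obtain K where g: "good (opform (\<rho> \<epsilon>)) K 1" using state_good[OF ns] by blast
    interpret it: iter "opform (\<rho> \<epsilon>)" K 1 by (rule iter.intro[OF g])
    show "\<exists>I::nat set. \<exists>\<Psi>::nat \<Rightarrow> vec. \<exists>lam::nat \<Rightarrow> real.
        orthonormal_on I \<Psi> \<and>
        (\<forall>i\<in>I. \<forall>n m. n > nat \<lfloor>C / \<epsilon>\<rfloor> \<longrightarrow> \<Psi> i (n, m) = 0) \<and>
        lam summable_on I \<and> (\<forall>i\<in>I. lam i > 0) \<and>
        (\<forall>x\<in>l2. \<forall>y\<in>l2. cinner y (\<rho> \<epsilon> x) =
            (\<Sum>\<^sub>\<infinity>i\<in>I. complex_of_real (lam i) * (cinner y (\<Psi> i) * cinner (\<Psi> i) x)))"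
    proof (intro exI conjI)
      show "orthonormal_on {i. it.lam i > 0} it.psi" by (rule it.orthonormal)
      show "\<forall>i\<in>{i. it.lam i > 0}. \<forall>n m. n > nat \<lfloor>C / \<epsilon>\<rfloor> \<longrightarrow> it.psi i (n, m) = 0"
      proof (intro ballI allI impI)
        fix i n m assume i: "i \<in> {i. it.lam i > 0}" and n: "n > nat \<lfloor>C / \<epsilon>\<rfloor>"
        have "Re (cinner (basis (n, m)) (\<rho> \<epsilon> (basis (n, m)))) = 0"
        proof (rule diag_zero[OF _ assms(2) ns])
          show "\<epsilon> > 0" using e by simp
          show "moment \<epsilon> (\<rho> \<epsilon>) k \<le> ennreal (C ^ k)" for k using bspec[OF H e] by blast
          show "fst (n, m) > nat \<lfloor>C / \<epsilon>\<rfloor>" using n by simp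
        qed
        hence "diag (opform (\<rho> \<epsilon>)) (n, m) = 0" by (simp add: diag_def opform_def)
        thus "it.psi i (n, m) = 0" using it.psi_supp i by simp
      qed
      show "it.lam summable_on {i. it.lam i > 0}" by (rule it.lam_summable_on)
      show "\<forall>i\<in>{i. it.lam i > 0}. it.lam i > 0" by simp
      show "\<forall>x\<in>l2. \<forall>y\<in>l2. cinner y (\<rho> \<epsilon> x) =
            (\<Sum>\<^sub>\<infinity>i\<in>{i. it.lam i > 0}. complex_of_real (it.lam i) * (cinner y (it.psi i) * cinner (it.psi i) x))"
        using it.representation by (simp add: opform_def)
    qed
  qed
next
  assume H: "\<forall>\<epsilon>\<in>{0<..<\<epsilon>bar}. \<exists>I::nat set. \<exists>\<Psi>::nat \<Rightarrow> vec. \<exists>lam::nat \<Rightarrow> real.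
        orthonormal_on I \<Psi> \<and>
        (\<forall>i\<in>I. \<forall>n m. n > nat \<lfloor>C / \<epsilon>\<rfloor> \<longrightarrow> \<Psi> i (n, m) = 0) \<and>
        lam summable_on I \<and> (\<forall>i\<in>I. lam i > 0) \<and>
        (\<forall>x\<in>l2. \<forall>y\<in>l2. cinner y (\<rho> \<epsilon> x) =
            (\<Sum>\<^sub>\<infinity>i\<in>I. complex_of_real (lam i) * (cinner y (\<Psi> i) * cinner (\<Psi> i) x)))"
  show "\<forall>\<epsilon>\<in>{0<..<\<epsilon>bar}. \<forall>k::nat. moment \<epsilon> (\<rho> \<epsilon>) k \<le> ennreal (C ^ k)"
  proof (intro ballI allI)
    fix \<epsilon> k assume e: "\<epsilon> \<in> {0<..<\<epsilon>bar}"
    have ns: "normal_state (\<rho> \<epsilon>)" using assms(1) e by blast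
    obtain I \<Psi> lam where all: "orthonormal_on I \<Psi> \<and>
        (\<forall>i\<in>I. \<forall>n m. n > nat \<lfloor>C / \<epsilon>\<rfloor> \<longrightarrow> \<Psi> i (n, m) = 0) \<and>
        lam summable_on I \<and> (\<forall>i\<in>I. lam i > 0) \<and>
        (\<forall>x\<in>l2. \<forall>y\<in>l2. cinner y (\<rho> \<epsilon> x) =
            (\<Sum>\<^sub>\<infinity>i\<in>I. complex_of_real (lam i) * (cinner y (\<Psi> i) * cinner (\<Psi> i) x)))"
      using bspec[OF H e] by (elim exE) (rule that)
    have sup: "\<forall>i\<in>I. \<forall>n m. n > nat \<lfloor>C / \<epsilon>\<rfloor> \<longrightarrow> \<Psi> i (n, m) = 0"
      using all by (elim conjE)
    have rep: "\<forall>x\<in>l2. \<forall>y\<in>l2. cinner y (\<rho> \<epsilon> x) =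
            (\<Sum>\<^sub>\<infinity>i\<in>I. complex_of_real (lam i) * (cinner y (\<Psi> i) * cinner (\<Psi> i) x))"
      using all by (elim conjE)
    show "moment \<epsilon> (\<rho> \<epsilon>) k \<le> ennreal (C ^ k)"
    proof (rule moment_bound[OF _ assms(2) ns])
      show "\<epsilon> > 0" using e by simp
      fix a :: "nat \<times> nat" assume a: "fst a > nat \<lfloor>C / \<epsilon>\<rfloor>"
      have z: "\<Psi> i a = 0" if "i \<in> I" for i
      proof -
        obtain n m where nm: "a = (n, m)" by (cases a)
        have "n > nat \<lfloor>C / \<epsilon>\<rfloor>" using a nm by simp
        thus ?thesis using bspec[OF sup that] nm by simp
      qed
      have "cinner (basis a) (\<rho> \<epsilon> (basis a)) =
            (\<Sum>\<^sub>\<infinity>i\<in>I. complex_of_real (lam i) * (cinner (basis a) (\<Psi> i) * cinner (\<Psi> i) (basis a)))"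
        using bspec[OF bspec[OF rep l2_basis[of a]] l2_basis[of a]] .
      also have "\<dots> = (\<Sum>\<^sub>\<infinity>i\<in>I. 0)"
        by (rule infsum_cong) (simp add: cinner_basis1 cinner_basis2 z)
      finally show "Re (cinner (basis a) (\<rho> \<epsilon> (basis a))) = 0" by simp
    qed
  qed
qed


end
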